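(* Let $(q_l)_{l\ge1}$ be positive numbers with $q_1=1$ and $0<R:=\lim_{l\to\infty}q_l/q_{l+1}<\infty$, and assume (EQ): $\tilde f(1)>1$, or $\tilde f(1)=1$ and $\tilde g(1)<\infty$. Let $\rho^*>0$, let $\mu^*\in(0,1]$ be the unique solution of $\tilde f(\mu^* )=1$, and let $z^*_l=N^*\tilde q_l(\mu^* )^l$ with $N^*=\rho^*/\tilde g(\mu^* )$. Then every $z\in X_{0+}$ with $\rho(z)=\rho^*$ satisfies $$\tilde A(z)\ \ge\ \rho^*\ln\mu^*=\tilde A(z^* ).$$
   Context: $X=\{z=(z_l)_{l\ge1}:\sum_l l|z_l|<\infty\}$, $X_{0+}$ its nonnegative elements, $\rho(z)=\sum_l lz_l$, $N(z)=\sum_l z_l$. $\tilde q_l=q_lR^l$, $\tilde f(\mu)=\sum_{l\ge1}\tilde q_l\mu^l$, $\tilde g(\mu)=\sum_{l\ge1}l\tilde q_l\mu^l$, $\tilde f(1)=\sum_l\tilde q_l\in(0,\infty]$, $\tilde g(1)=\sum_l l\tilde q_l\in(0,\infty]$. For $z\in X_{0+}\setminus\{0\}$, $\tilde A(z)=\sum_l z_l\ln\big(z_l/(\tilde q_lN(z))\big)$ with $0\ln0=0$, and $\tilde A(0)=0$. *)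

theory Defs
  imports "HOL-Analysis.Analysis"
begin

text \<open>Sequences z = (z_l)_{l \<ge> 1} are functions nat \<Rightarrow> real; the value at index 0 is ignored.\<close>

definition X0plus :: "(nat \<Rightarrow> real) set" where
  "X0plus = {z. (\<forall>l\<ge>1. z l \<ge> 0) \<and> summable (\<lambda>l. real l * \<bar>z l\<bar>)}"

definition rho :: "(nat \<Rightarrow> real) \<Rightarrow> real" where
  "rho z = (\<Sum>l. real (Suc l) * z (Suc l))"

definition Nz :: "(nat \<Rightarrow> real) \<Rightarrow> real" where
  "Nz z = (\<Sum>l. z (Suc l))"

definition qt :: "(nat \<Rightarrow> real) \<Rightarrow> real \<Rightarrow> nat \<Rightarrow> real" where
  "qt q R l = q l * R ^ l"

definition ftil :: "(nat \<Rightarrow> real) \<Rightarrow> real \<Rightarrow> real \<Rightarrow> ennreal" where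
  "ftil q R \<mu> = (\<Sum>l. ennreal (qt q R (Suc l) * \<mu> ^ Suc l))"

definition gtil :: "(nat \<Rightarrow> real) \<Rightarrow> real \<Rightarrow> real \<Rightarrow> ennreal" where
  "gtil q R \<mu> = (\<Sum>l. ennreal (real (Suc l) * qt q R (Suc l) * \<mu> ^ Suc l))"

text \<open>tilde A(z) = sum_l z_l ln(z_l/(tilde q_l N(z))), with 0 ln 0 = 0 (automatic since ln 0 = 0 in HOL), and tilde A(0) = 0\<close>
definition Atil :: "(nat \<Rightarrow> real) \<Rightarrow> real \<Rightarrow> (nat \<Rightarrow> real) \<Rightarrow> real" where
  "Atil q R z = (if (\<forall>l\<ge>1. z l = 0) then 0
     else (\<Sum>l. z (Suc l) * ln (z (Suc l) / (qt q R (Suc l) * Nz z))))"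

end

theory Submission
  imports Defs
begin

lemma xlnx_ge: fixes x y :: real assumes "x \<ge> 0" "y > 0"
  shows "x * ln (x / y) \<ge> x - y"
proof (cases "x = 0")
  case True thus ?thesis using assms by simp
next
  case False
  hence xp: "x > 0" using assms by simp
  have "ln (y / x) \<le> y / x - 1" using xp assms by (intro ln_le_minus_one) simp
  hence "x * ln (y / x) \<le> x * (y / x - 1)" using xp by (intro mult_left_mono) auto
  also have "\<dots> = y - x" using xp by (simp add: field_simps)
  finally have "x * ln (y / x) \<le> y - x" .
  moreover have "ln (x / y) = - ln (y / x)" using xp assms by (simp add: ln_div)
  ultimately show ?thesis by simp
qed

lemma gfin:
  fixes q :: "nat \<Rightarrow> real" and R \<mu> :: real
  assumes qpos: "\<forall>l\<ge>1. q l > 0"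
    and Rlim: "(\<lambda>l. q l / q (Suc l)) \<longlonglongrightarrow> R"
    and Rpos: "R > 0"
    and mu: "0 < \<mu>" "\<mu> < 1"
  shows "summable (\<lambda>l. real (Suc l) * qt q R (Suc l) * \<mu> ^ Suc l)"
proof -
  define f where "f l = real (Suc l) * qt q R (Suc l) * \<mu> ^ Suc l" for l
  have fpos: "f l > 0" for l using qpos Rpos mu by (auto simp: f_def qt_def)
  have eq: "f l / f (Suc l) = (real (Suc l) / real (Suc (Suc l))) * (q (Suc l) / q (Suc (Suc l))) * (1/R) * (1/\<mu>)" for l
  proof -
    have a: "q (Suc l) > 0" "q (Suc (Suc l)) > 0" using qpos by auto
    define K where "K = R ^ Suc l * \<mu> ^ Suc l"
    have K: "K \<noteq> 0" using Rpos mu by (simp add: K_def)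
    have e1: "f l = (real (Suc l) * q (Suc l)) * K" by (simp add: f_def qt_def K_def)
    have e2: "f (Suc l) = (real (Suc (Suc l)) * q (Suc (Suc l))) * (R * \<mu>) * K"
      by (simp only: f_def qt_def K_def power_Suc) (simp add: algebra_simps del: of_nat_Suc)
    have "f l / f (Suc l) = (real (Suc l) * q (Suc l)) / ((real (Suc (Suc l)) * q (Suc (Suc l))) * (R * \<mu>))"
      unfolding e1 e2 using K by simp
    also have "\<dots> = (real (Suc l) / real (Suc (Suc l))) * (q (Suc l) / q (Suc (Suc l))) * (1/R) * (1/\<mu>)"
      by (simp add: divide_simps del: of_nat_Suc)
    finally show ?thesis .
  qed
  have l1: "(\<lambda>l. real (Suc l) / real (Suc (Suc l))) \<longlonglongrightarrow> 1"
    using LIMSEQ_Suc[OF LIMSEQ_n_over_Suc_n[where 'a=real]] by simp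
  have l2: "(\<lambda>l. q (Suc l) / q (Suc (Suc l))) \<longlonglongrightarrow> R"
    using LIMSEQ_Suc[OF Rlim] by simp
  have "(\<lambda>l. f l / f (Suc l)) \<longlonglongrightarrow> 1 * R * (1/R) * (1/\<mu>)"
    unfolding eq by (intro tendsto_intros l1 l2)
  hence "(\<lambda>l. f l / f (Suc l)) \<longlonglongrightarrow> 1/\<mu>" using Rpos by simp
  hence "(\<lambda>l. ereal (f l / f (Suc l))) \<longlonglongrightarrow> ereal (1/\<mu>)" by (rule tendsto_ereal)
  hence "liminf (\<lambda>l. ereal (f l / f (Suc l))) = ereal (1/\<mu>)"
    by (intro lim_imp_Liminf) auto
  moreover have "1/\<mu> > 1" using mu by (simp add: field_simps)
  ultimately have "liminf (\<lambda>l. ereal (f l / f (Suc l))) > 1" by simp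
  hence "summable f" using fpos by (intro ratio_test_convergence) auto
  thus ?thesis unfolding f_def .
qed

lemma xlnx_bound: fixes x n :: real assumes "0 \<le> x" "x \<le> 1" "0 \<le> n"
  shows "\<bar>x * ln x\<bar> \<le> n * x + 2 * exp (- n / 2)"
proof (cases "x = 0")
  case True thus ?thesis by simp
next
  case False
  hence xp: "x > 0" using assms by simp
  have lnx: "ln x \<le> 0" using xp assms by simp
  have "x * ln x \<le> 0" using xp lnx by (simp add: mult_nonneg_nonpos)
  hence abs: "\<bar>x * ln x\<bar> = x * (- ln x)" by simp
  show ?thesis
  proof (cases "x \<ge> exp (- n)")
    case True
    hence "ln x \<ge> - n" using xp by (metis ln_exp ln_le_cancel_iff exp_gt_zero)
    hence "x * (- ln x) \<le> x * n" using xp by (intro mult_left_mono) auto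
    thus ?thesis using abs by (simp add: mult.commute add_increasing2)
  next
    case False
    hence xs: "x < exp (- n)" by simp
    have sp: "sqrt x > 0" using xp by simp
    have "ln (1 / sqrt x) \<le> 1 / sqrt x - 1" using sp by (intro ln_le_minus_one) simp
    moreover have "ln (1 / sqrt x) = - ln x / 2" using xp by (simp add: ln_div ln_sqrt)
    ultimately have "- ln x \<le> 2 / sqrt x" by (simp add: field_simps)
    hence "x * (- ln x) \<le> x * (2 / sqrt x)" using xp by (intro mult_left_mono) auto
    also have "x * (2 / sqrt x) = 2 * sqrt x" using xp
      by (metis real_div_sqrt times_divide_eq_right mult.commute less_imp_le)
    also have "sqrt x \<le> sqrt (exp (- n))" using xs by simp
    also have "sqrt (exp (- n)) = exp (- n / 2)"
      by (rule real_sqrt_unique) (simp_all add: power2_eq_square exp_add[symmetric])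
    finally show ?thesis using abs assms xp by (simp add: add_increasing)
  qed
qed

lemma lnq_bound:
  fixes q :: "nat \<Rightarrow> real" and R :: real
  assumes qpos: "\<forall>l\<ge>1. q l > 0"
    and Rlim: "(\<lambda>l. q l / q (Suc l)) \<longlonglongrightarrow> R"
    and Rpos: "R > 0"
  shows "\<exists>K. \<forall>l. \<bar>ln (qt q R (Suc l))\<bar> \<le> K * real (Suc l)"
proof -
  define r where "r l = qt q R (Suc (Suc l)) / qt q R (Suc l)" for l
  have qtpos: "qt q R (Suc l) > 0" for l using qpos Rpos by (simp add: qt_def)
  have req: "r l = R * inverse (q (Suc l) / q (Suc (Suc l)))" for l
    using qpos Rpos unfolding r_def qt_def by (simp add: field_simps)
  have "(\<lambda>l. q (Suc l) / q (Suc (Suc l))) \<longlonglongrightarrow> R" using LIMSEQ_Suc[OF Rlim] by simp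
  hence "r \<longlonglongrightarrow> R * inverse R" unfolding req using Rpos by (intro tendsto_intros) auto
  hence "r \<longlonglongrightarrow> 1" using Rpos by simp
  hence "(\<lambda>l. ln (r l)) \<longlonglongrightarrow> ln 1" by (intro tendsto_intros) auto
  hence "Bseq (\<lambda>l. ln (r l))" by (intro convergent_imp_Bseq convergentI)
  then obtain M where M: "M > 0" "\<And>l. norm (ln (r l)) \<le> M" by (auto simp: Bseq_def)
  have lnr: "ln (qt q R (Suc (Suc l))) = ln (qt q R (Suc l)) + ln (r l)" for l
  proof -
    have "qt q R (Suc (Suc l)) = qt q R (Suc l) * r l" using qtpos[of l] by (simp add: r_def)
    moreover have "r l > 0" using qtpos by (simp add: r_def)
    ultimately show ?thesis using qtpos[of l] by (simp add: ln_mult_pos)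
  qed
  define K where "K = \<bar>ln (qt q R 1)\<bar> + M"
  have "\<bar>ln (qt q R (Suc l))\<bar> \<le> \<bar>ln (qt q R 1)\<bar> + real l * M" for l
  proof (induction l)
    case 0 thus ?case by simp
  next
    case (Suc l)
    have "\<bar>ln (qt q R (Suc (Suc l)))\<bar> \<le> \<bar>ln (qt q R (Suc l))\<bar> + \<bar>ln (r l)\<bar>"
      unfolding lnr by simp
    also have "\<dots> \<le> \<bar>ln (qt q R 1)\<bar> + real l * M + M" using Suc M(2)[of l] by simp
    finally show ?case by (simp add: algebra_simps)
  qed
  moreover have "\<bar>ln (qt q R 1)\<bar> + real l * M \<le> K * real (Suc l)" for l
    using M(1) by (simp add: K_def algebra_simps)
  ultimately show ?thesis by (meson order_trans)
qed

theorem corollary11: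
  fixes q :: "nat \<Rightarrow> real" and R \<rho>s \<mu>s :: real
  assumes qpos: "\<forall>l\<ge>1. q l > 0"
    and q1: "q 1 = 1"
    and Rlim: "(\<lambda>l. q l / q (Suc l)) \<longlonglongrightarrow> R"
    and Rpos: "R > 0"
    and EQ: "ftil q R 1 > 1 \<or> (ftil q R 1 = 1 \<and> gtil q R 1 < \<infinity>)"
    and rhos: "\<rho>s > 0"
    and mus: "\<mu>s \<in> {0<..1}" "ftil q R \<mu>s = 1"
  shows "\<forall>z\<in>X0plus. rho z = \<rho>s \<longrightarrow>
           Atil q R z \<ge> \<rho>s * ln \<mu>s \<and>
           \<rho>s * ln \<mu>s = Atil q R (\<lambda>l. (\<rho>s / enn2real (gtil q R \<mu>s)) * qt q R l * \<mu>s ^ l)"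
proof -
  have mu0: "\<mu>s > 0" and mu1: "\<mu>s \<le> 1" using mus(1) by auto
  have lnmu: "ln \<mu>s \<le> 0" using mu0 mu1 by simp
  have qtpos: "qt q R (Suc l) > 0" for l using qpos Rpos by (simp add: qt_def)
  define w where "w l = qt q R (Suc l) * \<mu>s ^ Suc l" for l
  have wpos: "w l > 0" for l using qtpos mu0 by (simp add: w_def)
  have wsum: "w sums 1"
  proof -
    have ne: "(\<Sum>l. ennreal (w l)) \<noteq> top" using mus(2) by (simp add: ftil_def w_def)
    have sw: "summable w" using summable_suminf_not_top[OF _ ne] wpos by (simp add: less_imp_le)
    have e1: "(\<Sum>l. ennreal (w l)) = ennreal (suminf w)"
      by (rule suminf_ennreal2) (use wpos sw in \<open>auto intro: less_imp_le\<close>)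
    have e2: "ftil q R \<mu>s = (\<Sum>l. ennreal (w l))" by (simp add: ftil_def w_def)
    have "ennreal (suminf w) = 1" using e1 e2 mus(2) by simp
    hence "suminf w = 1" by simp
    thus ?thesis using sw by (simp add: summable_sums_iff)
  qed
  define g where "g l = real (Suc l) * qt q R (Suc l) * \<mu>s ^ Suc l" for l
  have gpos: "g l > 0" for l using qtpos mu0 by (simp add: g_def)
  have gsum: "summable g"
  proof (cases "\<mu>s = 1")
    case True
    hence "ftil q R 1 = 1" using mus(2) by simp
    hence "gtil q R 1 < \<infinity>" using EQ by auto
    hence ne: "(\<Sum>l. ennreal (g l)) \<noteq> top" using True by (simp add: gtil_def g_def)
    show ?thesis using summable_suminf_not_top[OF _ ne] gpos by (simp add: less_imp_le)
  next
    case False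
    thus ?thesis unfolding g_def using gfin[OF qpos Rlim Rpos mu0] mu1 by simp
  qed
  define G where "G = suminf g"
  have e1: "(\<Sum>l. ennreal (g l)) = ennreal G" unfolding G_def
    by (rule suminf_ennreal2) (use gpos gsum in \<open>auto intro: less_imp_le\<close>)
  have GG: "gtil q R \<mu>s = ennreal G" using e1 by (simp add: gtil_def g_def)
  have Gpos: "G > 0" unfolding G_def using gsum gpos by (intro suminf_pos) auto
  have enG: "enn2real (gtil q R \<mu>s) = G" using GG Gpos by simp
  show ?thesis
  proof (intro ballI impI conjI)
    fix z assume zX: "z \<in> X0plus" and rz: "rho z = \<rho>s"
    have znn: "z (Suc l) \<ge> 0" for l using zX by (simp add: X0plus_def)
    have sabs: "summable (\<lambda>l. real l * \<bar>z l\<bar>)" using zX by (simp add: X0plus_def)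
    have sr: "summable (\<lambda>l. real (Suc l) * z (Suc l))"
    proof -
      have "summable (\<lambda>l. real (Suc l) * \<bar>z (Suc l)\<bar>)"
        using summable_Suc_iff[of "\<lambda>l. real l * \<bar>z l\<bar>"] sabs by (simp only:)
      moreover have "(\<lambda>l. real (Suc l) * \<bar>z (Suc l)\<bar>) = (\<lambda>l. real (Suc l) * z (Suc l))"
        using znn by (simp del: of_nat_Suc)
      ultimately show ?thesis by simp
    qed
    have sz: "summable (\<lambda>l. z (Suc l))"
    proof (rule summable_comparison_test'[OF sr, of 0])
      fix n :: nat
      have "0 \<le> real n * z (Suc n)" using znn[of n] by simp
      thus "norm (z (Suc n)) \<le> real (Suc n) * z (Suc n)" using znn[of n] by (simp add: algebra_simps)
    qed
    define N where "N = Nz z"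
    have rhoeq: "(\<lambda>l. real (Suc l) * z (Suc l)) sums \<rho>s" using sr rz by (simp add: rho_def summable_sums_iff)
    have nz: "\<not> (\<forall>l\<ge>1. z l = 0)"
    proof
      assume "\<forall>l\<ge>1. z l = 0"
      hence "rho z = 0" by (simp add: rho_def)
      thus False using rz rhos by simp
    qed
    then obtain l1 where l1: "l1 \<ge> 1" "z l1 \<noteq> 0" by auto
    define l0 where "l0 = l1 - 1"
    have "Suc l0 = l1" using l1 by (simp add: l0_def)
    hence "z (Suc l0) \<noteq> 0" using l1 by simp
    hence zl0: "z (Suc l0) > 0" using znn[of l0] by simp
    have Npos: "N > 0" unfolding N_def Nz_def using sz znn zl0 by (intro suminf_pos2) auto
    define a where "a l = z (Suc l) * ln (z (Suc l) / (qt q R (Suc l) * N))" for l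
    define b where "b l = z (Suc l) * ln (z (Suc l) / (w l * N))" for l
    have aeq: "a l = b l + (real (Suc l) * z (Suc l)) * ln \<mu>s" for l
    proof (cases "z (Suc l) = 0")
      case True thus ?thesis by (simp add: a_def b_def)
    next
      case False
      hence zp: "z (Suc l) > 0" using znn[of l] by simp
      have "z (Suc l) / (qt q R (Suc l) * N) = (z (Suc l) / (w l * N)) * \<mu>s ^ Suc l"
        using qtpos[of l] Npos mu0 by (simp add: w_def field_simps)
      hence "ln (z (Suc l) / (qt q R (Suc l) * N)) = ln ((z (Suc l) / (w l * N)) * \<mu>s ^ Suc l)"
        by (simp only:)
      also have "\<dots> = ln (z (Suc l) / (w l * N)) + ln (\<mu>s ^ Suc l)"
        using zp wpos[of l] Npos mu0 by (intro ln_mult_pos) auto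
      also have "ln (\<mu>s ^ Suc l) = real (Suc l) * ln \<mu>s" by (rule ln_realpow)
      finally have "ln (z (Suc l) / (qt q R (Suc l) * N)) = ln (z (Suc l) / (w l * N)) + real (Suc l) * ln \<mu>s" .
      thus ?thesis by (simp add: a_def b_def algebra_simps)
    qed
    have Aeq: "Atil q R z = suminf a" using nz by (simp add: Atil_def a_def[abs_def] N_def)
    obtain K where K: "\<And>l. \<bar>ln (qt q R (Suc l))\<bar> \<le> K * real (Suc l)"
      using lnq_bound[OF qpos Rlim Rpos] by blast
    have "(\<lambda>l. z (Suc l)) \<longlonglongrightarrow> 0" using summable_LIMSEQ_zero[OF sz] .
    hence "eventually (\<lambda>l. z (Suc l) < 1) sequentially" by (rule order_tendstoD) simp
    then obtain N0 where N0: "\<And>l. l \<ge> N0 \<Longrightarrow> z (Suc l) < 1" by (auto simp: eventually_sequentially)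
    have geo: "summable (\<lambda>l. 2 * exp (- real (Suc l) / 2))"
    proof -
      have e: "exp (- real (Suc l) / 2) = exp (-1/2) * exp (-1/2) ^ l" for l
      proof -
        have "exp (- real (Suc l) / 2) = exp (real (Suc l) * (-1/2))" by (simp add: field_simps)
        also have "\<dots> = exp (-1/2) ^ Suc l" by (rule exp_of_nat_mult)
        finally show ?thesis by simp
      qed
      have "summable (\<lambda>l. exp (-1/2::real) ^ l)" by (rule summable_geometric) simp
      hence "summable (\<lambda>l. 2 * (exp (-1/2) * exp (-1/2::real) ^ l))" by (intro summable_mult)
      thus ?thesis unfolding e .
    qed
    have s1: "summable (\<lambda>l. z (Suc l) * ln (z (Suc l)))"
    proof (rule summable_comparison_test'[OF summable_add[OF sr geo], of N0])
      fix l assume "l \<ge> N0"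
      hence "z (Suc l) \<le> 1" using N0 by (simp add: less_imp_le)
      thus "norm (z (Suc l) * ln (z (Suc l))) \<le> real (Suc l) * z (Suc l) + 2 * exp (- real (Suc l) / 2)"
        using xlnx_bound[OF znn[of l], of "real (Suc l)"] by simp
    qed
    have s2: "summable (\<lambda>l. z (Suc l) * ln (qt q R (Suc l)))"
    proof (rule summable_comparison_test'[OF summable_mult[OF sr, of K], of 0])
      fix l :: nat
      have "\<bar>z (Suc l)\<bar> * \<bar>ln (qt q R (Suc l))\<bar> \<le> z (Suc l) * (K * real (Suc l))"
        using znn[of l] K[of l] by (simp add: mult_left_mono)
      thus "norm (z (Suc l) * ln (qt q R (Suc l))) \<le> K * (real (Suc l) * z (Suc l))"
        by (simp add: abs_mult algebra_simps)
    qed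
    have s3: "summable (\<lambda>l. z (Suc l) * ln N)" by (intro summable_mult2 sz)
    have aeq2: "a = (\<lambda>l. z (Suc l) * ln (z (Suc l)) - z (Suc l) * ln (qt q R (Suc l)) - z (Suc l) * ln N)"
    proof
      fix l
      show "a l = z (Suc l) * ln (z (Suc l)) - z (Suc l) * ln (qt q R (Suc l)) - z (Suc l) * ln N"
      proof (cases "z (Suc l) = 0")
        case True thus ?thesis by (simp add: a_def)
      next
        case False
        hence zp: "z (Suc l) > 0" using znn[of l] by simp
        have "ln (z (Suc l) / (qt q R (Suc l) * N)) = ln (z (Suc l)) - ln (qt q R (Suc l) * N)"
          using zp qtpos[of l] Npos by (intro ln_divide_pos) auto
        also have "ln (qt q R (Suc l) * N) = ln (qt q R (Suc l)) + ln N"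
          using qtpos[of l] Npos by (intro ln_mult_pos) auto
        finally have L: "ln (z (Suc l) / (qt q R (Suc l) * N)) = ln (z (Suc l)) - (ln (qt q R (Suc l)) + ln N)" .
        show ?thesis unfolding a_def L by (simp add: algebra_simps)
      qed
    qed
    have asum: "summable a" unfolding aeq2 by (intro summable_diff s1 s2 s3)
    show "Atil q R z \<ge> \<rho>s * ln \<mu>s"
    proof -
      have r2: "(\<lambda>l. (real (Suc l) * z (Suc l)) * ln \<mu>s) sums (\<rho>s * ln \<mu>s)"
        by (intro sums_mult2 rhoeq)
      have bs: "b = (\<lambda>l. a l - (real (Suc l) * z (Suc l)) * ln \<mu>s)" using aeq by auto
      have bsum: "b sums (suminf a - \<rho>s * ln \<mu>s)"
        unfolding bs by (intro sums_diff r2) (use asum in \<open>simp add: summable_sums\<close>)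
      have zsN: "(\<lambda>l. z (Suc l)) sums N" using sz by (simp add: N_def Nz_def summable_sums_iff)
      have dsum: "(\<lambda>l. z (Suc l) - N * w l) sums (N - N * 1)"
        by (intro sums_diff zsN sums_mult wsum)
      have "b l \<ge> z (Suc l) - N * w l" for l
        using xlnx_ge[OF znn[of l], of "w l * N"] wpos[of l] Npos by (simp add: b_def mult.commute)
      hence "N - N * 1 \<le> suminf a - \<rho>s * ln \<mu>s"
        using sums_le[OF _ dsum bsum] by blast
      thus ?thesis using Aeq by simp
    qed
  next
    define c where "c = \<rho>s / G"
    have cpos: "c > 0" using rhos Gpos by (simp add: c_def)
    define zs where "zs = (\<lambda>l. c * qt q R l * \<mu>s ^ l)"
    have lhs: "(\<lambda>l. (\<rho>s / enn2real (gtil q R \<mu>s)) * qt q R l * \<mu>s ^ l) = zs"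
      using enG by (simp add: zs_def c_def)
    have nz: "\<not> (\<forall>l\<ge>1. zs l = 0)"
      using cpos qtpos[of 0] mu0 by (auto simp: zs_def intro!: exI[of _ 1])
    have zsw: "zs (Suc l) = c * w l" for l by (simp add: zs_def w_def)
    have Nzs: "Nz zs = c" unfolding Nz_def zsw using sums_mult[OF wsum, of c] by (simp add: sums_iff)
    have trm: "zs (Suc l) * ln (zs (Suc l) / (qt q R (Suc l) * Nz zs)) = (c * ln \<mu>s) * g l" for l
    proof -
      have "zs (Suc l) / (qt q R (Suc l) * Nz zs) = \<mu>s ^ Suc l"
        unfolding Nzs using qtpos[of l] cpos by (simp add: zs_def)
      hence "ln (zs (Suc l) / (qt q R (Suc l) * Nz zs)) = real (Suc l) * ln \<mu>s"
        using ln_realpow[of \<mu>s "Suc l"] by (simp only:)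
      thus ?thesis unfolding zs_def g_def by (simp del: of_nat_Suc)
    qed
    have "Atil q R zs = (\<Sum>l. (c * ln \<mu>s) * g l)"
      using nz unfolding Atil_def trm by (simp only: if_False)
    also have "\<dots> = c * ln \<mu>s * G" unfolding G_def using suminf_mult[OF gsum] by simp
    also have "\<dots> = \<rho>s * ln \<mu>s" using Gpos by (simp add: c_def)
    finally show "\<rho>s * ln \<mu>s = Atil q R (\<lambda>l. (\<rho>s / enn2real (gtil q R \<mu>s)) * qt q R l * \<mu>s ^ l)"
      using lhs by simp
  qed
qed

end
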